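(* Let $A\in\mathbb{R}^{n\times n}$ be arbitrary. Then for almost every $T>0$ (that is, for all $T>0$ outside a set of Lebesgue measure zero), the finite-time controllability scoring problem (FTCSP) $$\text{minimize } h_T(p) \quad \text{subject to } p\in X_T\cap\Delta$$ admits a unique optimal solution, both in the case $h_T=f_T$ (the solution being called the VCS) and in the case $h_T=g_T$ (the solution being called the AECS).
   Context: For $T>0$ and $i=1,\dots,n$ let $e_i$ be the $i$-th standard basis vector of $\mathbb{R}^n$ and $W_i(T):=\int_0^T e^{At}e_ie_i^\top e^{A^\top t}\,dt$. For $p=(p_i)\in\mathbb{R}^n$ put $W(p,T):=\sum_{i=1}^n p_iW_i(T)$. Define $X_T:=\{p\in\mathbb{R}^n : W(p,T)\succ 0\}$ (positive definite) and the standard simplex $\Delta:=\{p\in\mathbb{R}^n:\sum_i p_i=1,\ p_i\ge 0\ \forall i\}$. On $X_T$ define $f_T(p):=-\log\det W(p,T)$ and $g_T(p):=\operatorname{tr}(W(p,T)^{-1})$. *)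

theory Defs
  imports "HOL-Analysis.Analysis"
begin

primrec mpow :: "real^'n^'n \<Rightarrow> nat \<Rightarrow> real^'n^'n" where
  "mpow M 0 = mat 1"
| "mpow M (Suc k) = M ** mpow M k"

definition mexp :: "real \<Rightarrow> real^'n^'n \<Rightarrow> real^'n^'n" where
  "mexp t A = (\<Sum>k. ((t ^ k) / fact k) *\<^sub>R mpow A k)"

definition ebasis :: "'n::finite \<Rightarrow> real^'n" where
  "ebasis i = axis i 1"

definition outer :: "real^'n \<Rightarrow> real^'n \<Rightarrow> real^'n^'n" where
  "outer u v = (\<chi> a b. u $ a * v $ b)"

definition Wi :: "real^'n^'n \<Rightarrow> 'n::finite \<Rightarrow> real \<Rightarrow> real^'n^'n" where
  "Wi A i T = integral {0..T}
     (\<lambda>t. mexp t A ** outer (ebasis i) (ebasis i) ** mexp t (transpose A))"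

definition Wp :: "real^'n^'n \<Rightarrow> real^'n \<Rightarrow> real \<Rightarrow> real^'n^'n" where
  "Wp A p T = (\<Sum>i\<in>UNIV. (p $ i) *\<^sub>R Wi A i T)"

definition pos_def :: "real^'n^'n \<Rightarrow> bool" where
  "pos_def M \<longleftrightarrow> transpose M = M \<and> (\<forall>x. x \<noteq> 0 \<longrightarrow> x \<bullet> (M *v x) > 0)"

definition XT :: "real^'n^'n \<Rightarrow> real \<Rightarrow> (real^'n) set" where
  "XT A T = {p. pos_def (Wp A p T)}"

definition std_simplex :: "(real^'n) set" where
  "std_simplex = {p. sum (\<lambda>i. p $ i) UNIV = 1 \<and> (\<forall>i. p $ i \<ge> 0)}"

definition fT :: "real^'n^'n \<Rightarrow> real \<Rightarrow> real^'n \<Rightarrow> real" where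
  "fT A T p = - ln (det (Wp A p T))"

definition gT :: "real^'n^'n \<Rightarrow> real \<Rightarrow> real^'n \<Rightarrow> real" where
  "gT A T p = trace (matrix_inv (Wp A p T))"

definition unique_minimizer :: "('a \<Rightarrow> real) \<Rightarrow> 'a set \<Rightarrow> bool" where
  "unique_minimizer h S \<longleftrightarrow> (\<exists>!p. p \<in> S \<and> (\<forall>q\<in>S. h p \<le> h q))"

end

theory Submission
  imports Defs "HOL-Complex_Analysis.Complex_Analysis" "HOL-Computational_Algebra.Fundamental_Theorem_Algebra"
begin


definition symm :: "real^'n^'n \<Rightarrow> bool" where
  "symm M \<longleftrightarrow> (\<forall>i j. M$i$j = M$j$i)"

lemma symm_transpose: "transpose M = M \<longleftrightarrow> symm M"
  by (auto simp: symm_def transpose_def vec_eq_iff)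

lemma qf_sum: fixes M :: "real^'n^'n" shows "x \<bullet> (M *v x) = (\<Sum>i\<in>UNIV. \<Sum>j\<in>UNIV. x$i * M$i$j * x$j)"
  by (simp add: inner_vec_def matrix_vector_mult_def sum_distrib_left mult.assoc)

lemma bf_sum: fixes M :: "real^'n^'n" shows "x \<bullet> (M *v y) = (\<Sum>i\<in>UNIV. \<Sum>j\<in>UNIV. x$i * M$i$j * y$j)"
  by (simp add: inner_vec_def matrix_vector_mult_def sum_distrib_left mult.assoc)

lemma bf_symm: "symm M \<Longrightarrow> x \<bullet> (M *v y) = y \<bullet> (M *v x)"
  unfolding bf_sum symm_def
  by (subst sum.swap) (auto intro!: sum.cong simp: mult.commute mult.left_commute)

lemma bf_add_left: fixes M :: "real^'n^'n" shows "(x + z) \<bullet> (M *v y) = x \<bullet> (M *v y) + z \<bullet> (M *v y)"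
  by (simp add: inner_add_left)

lemma bf_add_right: fixes M :: "real^'n^'n" shows "x \<bullet> (M *v (y + z)) = x \<bullet> (M *v y) + x \<bullet> (M *v z)"
  by (simp add: matrix_vector_right_distrib inner_add_right)

lemma bf_scale_left: fixes M :: "real^'n^'n" shows "(c *\<^sub>R x) \<bullet> (M *v y) = c * (x \<bullet> (M *v y))"
  by simp

lemma bf_scale_right: fixes M :: "real^'n^'n" shows "x \<bullet> (M *v (c *\<^sub>R y)) = c * (x \<bullet> (M *v y))"
  unfolding bf_sum by (simp add: sum_distrib_left mult_ac)

lemma bf_matadd: fixes M :: "real^'n^'n" shows "x \<bullet> ((M + N) *v y) = x \<bullet> (M *v y) + x \<bullet> (N *v y)"
  by (simp add: matrix_vector_mult_add_rdistrib inner_add_right)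

lemma bf_matscale: fixes M :: "real^'n^'n" shows "x \<bullet> ((c *\<^sub>R M) *v y) = c * (x \<bullet> (M *v y))"
  unfolding bf_sum by (simp add: sum_distrib_left mult_ac)

definition psd :: "real^'n^'n \<Rightarrow> bool" where
  "psd M \<longleftrightarrow> symm M \<and> (\<forall>x. x \<bullet> (M *v x) \<ge> 0)"

lemma pos_def_alt: "pos_def M \<longleftrightarrow> symm M \<and> (\<forall>x. x \<noteq> 0 \<longrightarrow> x \<bullet> (M *v x) > 0)"
  by (simp add: pos_def_def symm_transpose)

lemma pos_def_psd: "pos_def M \<Longrightarrow> psd M"
  unfolding pos_def_alt psd_def by (metis inner_zero_left order.strict_implies_order order_refl)

lemma psd_null:
  assumes "psd M" "x \<bullet> (M *v x) = 0"
  shows "M *v x = 0"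
proof (rule ccontr)
  let ?y = "M *v x"
  assume ne: "?y \<noteq> 0"
  have sy: "symm M" and nn: "\<And>z. z \<bullet> (M *v z) \<ge> 0" using assms(1) by (auto simp: psd_def)
  define a where "a = ?y \<bullet> ?y"
  define c where "c = ?y \<bullet> (M *v ?y)"
  have a: "a > 0" using ne by (simp add: a_def)
  have expand: "(x + t *\<^sub>R ?y) \<bullet> (M *v (x + t *\<^sub>R ?y)) = 2 * t * a + t * t * c" for t
  proof -
    have "?y \<bullet> (M *v x) = x \<bullet> (M *v ?y)" using bf_symm[OF sy] by simp
    moreover have "x \<bullet> (M *v ?y) = a" using bf_symm[OF sy, of x ?y] by (simp add: a_def)
    ultimately show ?thesis
      using assms(2) by (simp add: bf_add_left bf_add_right bf_scale_right c_def a_def algebra_simps)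
  qed
  define s where "s = a / (\<bar>c\<bar> + 1)"
  have s0: "s > 0" using a by (simp add: s_def)
  have "0 \<le> 2 * (-s) * a + (-s) * (-s) * c" using nn expand by metis
  then have "s * (2 * a) \<le> s * (s * c)" by (simp add: algebra_simps)
  then have h1: "2 * a \<le> s * c" using s0 by simp
  have "s * c \<le> s * \<bar>c\<bar>" using s0 by (simp add: mult_left_mono)
  also have "s * \<bar>c\<bar> = a * (\<bar>c\<bar> / (\<bar>c\<bar> + 1))" by (simp add: s_def)
  also have "\<dots> \<le> a * 1" using a by (intro mult_left_mono) auto
  finally have "s * c \<le> a" by simp
  with h1 a show False by linarith
qed


lemma ker_det0:
  fixes M :: "'a::field^'n^'n"
  assumes "M *v x = 0" "x \<noteq> 0"
  shows "det M = 0"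
proof (rule ccontr)
  assume "det M \<noteq> 0"
  then have "invertible M" by (simp add: invertible_det_nz)
  then have "inj ((*v) M)" by (rule inj_matrix_vector_mult)
  moreover have "M *v x = M *v 0" using assms by simp
  ultimately show False using assms(2) by (meson injD)
qed

lemma det0_ker:
  fixes M :: "'a::field^'n^'n"
  assumes "det M = 0"
  shows "\<exists>x. x \<noteq> 0 \<and> M *v x = 0"
proof -
  have "\<not> inj ((*v) M)"
    using det_nz_iff_inj_gen[OF matrix_vector_mul_linear_gen[of M]] assms
    by (simp add: matrix_of_matrix_vector_mul)
  then obtain u v where "u \<noteq> v" "M *v u = M *v v" by (auto simp: inj_def)
  then show ?thesis
    by (intro exI[of _ "u - v"]) (simp add: matrix_vector_mult_diff_distrib)
qed

definition polymat :: "'a::comm_ring_1^'n^'n \<Rightarrow> 'a^'n^'n \<Rightarrow> 'a poly" where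
  "polymat A B = (\<Sum>p | p permutes (UNIV::'n set). of_int (sign p) * (\<Prod>i\<in>UNIV. [:A$i$p i, B$i$p i:]))"

lemma poly_polymat: "poly (polymat A B) t = det (\<chi> i j. A$i$j + t * B$i$j)"
  unfolding polymat_def det_def by (simp add: poly_sum poly_prod poly_of_int)

lemma det_affine_poly:
  fixes A B :: "real^'n^'n"
  shows "det (A + t *\<^sub>R B) = poly (polymat A B) t"
proof -
  have "A + t *\<^sub>R B = (\<chi> i j. A$i$j + t * B$i$j)" by (simp add: vec_eq_iff)
  then show ?thesis by (simp add: poly_polymat)
qed

lemma continuous_det_affine:
  fixes A B :: "real^'n^'n"
  shows "continuous_on S (\<lambda>t. det (A + t *\<^sub>R B))"
  unfolding det_affine_poly by (intro continuous_intros)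

lemma pd_I: "pos_def (mat 1 :: real^'n^'n)"
  unfolding pos_def_def by (simp add: matrix_vector_mul_lid)

lemma pd_comb:
  fixes A B :: "real^'n^'n"
  assumes "pos_def A" "pos_def B" "0 \<le> t" "t \<le> 1"
  shows "pos_def ((1 - t) *\<^sub>R A + t *\<^sub>R B)"
proof -
  have sA: "symm A" and sB: "symm B" using assms by (auto simp: pos_def_alt)
  have "symm ((1 - t) *\<^sub>R A + t *\<^sub>R B)" using sA sB by (simp add: symm_def)
  moreover have "x \<bullet> (((1 - t) *\<^sub>R A + t *\<^sub>R B) *v x) > 0" if "x \<noteq> 0" for x
  proof -
    have a: "x \<bullet> (A *v x) > 0" and b: "x \<bullet> (B *v x) > 0" using assms that by (auto simp: pos_def_alt)
    have "x \<bullet> (((1 - t) *\<^sub>R A + t *\<^sub>R B) *v x) = (1-t) * (x \<bullet> (A *v x)) + t * (x \<bullet> (B *v x))"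
      by (simp add: bf_matadd bf_matscale)
    also have "\<dots> > 0"
    proof (cases "t = 1")
      case True then show ?thesis using b by simp
    next
      case False
      then have "(1-t) * (x \<bullet> (A *v x)) > 0" using assms a by simp
      moreover have "t * (x \<bullet> (B *v x)) \<ge> 0" using assms b by simp
      ultimately show ?thesis by linarith
    qed
    finally show ?thesis .
  qed
  ultimately show ?thesis by (simp add: pos_def_alt)
qed

lemma pd_det_nz:
  fixes M :: "real^'n^'n"
  assumes "pos_def M" shows "det M \<noteq> 0"
proof
  assume "det M = 0"
  then obtain x where "x \<noteq> 0" "M *v x = 0" using det0_ker by blast
  then show False using assms by (auto simp: pos_def_alt)
qed

lemma pd_det_pos:
  fixes M :: "real^'n^'n"
  assumes "pos_def M" shows "det M > 0"
proof (rule ccontr)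
  assume "\<not> det M > 0"
  let ?f = "\<lambda>t. det (mat 1 + t *\<^sub>R (M - mat 1))"
  have f1: "?f 1 \<le> 0" using \<open>\<not> det M > 0\<close> by simp
  have f0: "0 \<le> ?f 0" by simp
  obtain t where t: "0 \<le> t" "t \<le> 1" "?f t = 0"
    using IVT2'[of ?f 1 0 0, OF f1 f0 _ continuous_det_affine] by auto
  have "mat 1 + t *\<^sub>R (M - mat 1) = (1 - t) *\<^sub>R mat 1 + t *\<^sub>R M"
    by (simp add: algebra_simps)
  then have "pos_def (mat 1 + t *\<^sub>R (M - mat 1))"
    using pd_comb[OF pd_I assms t(1,2)] by simp
  then show False using pd_det_nz t(3) by blast
qed

lemma qf_scale: fixes M :: "real^'n^'n" shows "(c *\<^sub>R y) \<bullet> (M *v (c *\<^sub>R y)) = c * c * (y \<bullet> (M *v y))"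
  by (simp add: bf_scale_right)

lemma continuous_qf: fixes M :: "real^'n^'n" shows "continuous_on S (\<lambda>y. y \<bullet> (M *v y))"
  unfolding qf_sum by (intro continuous_intros)

lemma rayleigh:
  fixes W D :: "real^'n^'n"
  assumes W: "pos_def W" and D: "symm D"
  shows "\<exists>l x. x \<noteq> 0 \<and> D *v x = l *\<^sub>R (W *v x) \<and> (\<forall>y. y \<bullet> (D *v y) \<le> l * (y \<bullet> (W *v y)))"
proof -
  let ?S = "sphere (0::real^'n) 1"
  let ?R = "\<lambda>y. (y \<bullet> (D *v y)) / (y \<bullet> (W *v y))"
  have Wpos: "\<And>y. y \<noteq> 0 \<Longrightarrow> y \<bullet> (W *v y) > 0" using W by (auto simp: pos_def_alt)
  have ne: "?S \<noteq> {}"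
  proof -
    obtain k :: 'n where True by simp
    have "axis k (1::real) \<in> ?S" by simp
    then show ?thesis by blast
  qed
  have cont: "continuous_on ?S ?R"
  proof (intro continuous_intros continuous_qf ballI)
    fix y :: "real^'n" assume "y \<in> ?S"
    then have "y \<noteq> 0" by auto
    then show "y \<bullet> (W *v y) \<noteq> 0" using Wpos[of y] by simp
  qed
  obtain x where x: "x \<in> ?S" and xmax: "\<And>y. y \<in> ?S \<Longrightarrow> ?R y \<le> ?R x"
    using continuous_attains_sup[OF compact_sphere ne cont] by blast
  define l where "l = ?R x"
  have x0: "x \<noteq> 0" using x by auto
  have le: "y \<bullet> (D *v y) \<le> l * (y \<bullet> (W *v y))" for y
  proof (cases "y = 0")
    case True then show ?thesis by simp
  next
    case False
    define c where "c = inverse (norm y)"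
    have c0: "c \<noteq> 0" using False by (simp add: c_def)
    have "c *\<^sub>R y \<in> ?S" using False by (simp add: c_def)
    then have "?R (c *\<^sub>R y) \<le> l" using xmax l_def by blast
    moreover have "?R (c *\<^sub>R y) = ?R y" unfolding qf_scale using c0 by simp
    ultimately have "?R y \<le> l" by simp
    then show ?thesis using Wpos[OF False] by (simp add: divide_le_eq)
  qed
  let ?N = "l *\<^sub>R W - D"
  have sN: "symm ?N" using W D by (simp add: symm_def pos_def_alt)
  have psdN: "psd ?N"
    unfolding psd_def using sN le by (simp add: matrix_vector_mult_diff_rdistrib inner_diff_right bf_matscale)
  have "x \<bullet> (?N *v x) = 0"
    using Wpos[OF x0] by (simp add: matrix_vector_mult_diff_rdistrib inner_diff_right bf_matscale l_def)
  then have "?N *v x = 0" using psd_null[OF psdN] by blast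
  then have "D *v x = l *\<^sub>R (W *v x)"
    by (simp add: matrix_vector_mult_diff_rdistrib scaleR_matrix_vector_assoc)
  then show ?thesis using x0 le by blast
qed






definition cm :: "real^'n^'n \<Rightarrow> complex^'n^'n" where
  "cm M = (\<chi> i j. complex_of_real (M$i$j))"

lemma det_cm: "det (cm M) = of_real (det M)"
  unfolding det_def cm_def by simp

lemma poly_PC_real:
  fixes W D :: "real^'n^'n"
  shows "poly (polymat (cm W) (cm D)) (of_real t) = of_real (det (W + t *\<^sub>R D))"
proof -
  have "(\<chi> i j. cm W$i$j + of_real t * cm D$i$j) = cm (W + t *\<^sub>R D)"
    by (simp add: cm_def vec_eq_iff)
  then show ?thesis by (simp add: poly_polymat det_cm)
qed

lemma herm_form:
  fixes M :: "real^'n^'n" and x :: "complex^'n"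
  assumes "symm M"
  defines "u \<equiv> (\<chi> i. Re (x$i))" and "v \<equiv> (\<chi> i. Im (x$i))"
  shows "(\<Sum>i\<in>UNIV. \<Sum>j\<in>UNIV. cnj (x$i) * of_real (M$i$j) * x$j)
          = of_real (u \<bullet> (M *v u) + v \<bullet> (M *v v))"
proof (rule complex_eqI)
  show "Re (\<Sum>i\<in>UNIV. \<Sum>j\<in>UNIV. cnj (x$i) * of_real (M$i$j) * x$j) = Re (of_real (u \<bullet> (M *v u) + v \<bullet> (M *v v)))"
    unfolding qf_sum u_def v_def by (simp add: sum.distrib[symmetric] algebra_simps)
  have "(\<Sum>i\<in>UNIV. \<Sum>j\<in>UNIV. M$i$j * (Re (x$i) * Im (x$j))) = u \<bullet> (M *v v)"
    unfolding bf_sum u_def v_def by (simp add: algebra_simps)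
  moreover have "(\<Sum>i\<in>UNIV. \<Sum>j\<in>UNIV. M$i$j * (Im (x$i) * Re (x$j))) = v \<bullet> (M *v u)"
    unfolding bf_sum u_def v_def by (simp add: algebra_simps)
  moreover have "u \<bullet> (M *v v) = v \<bullet> (M *v u)" using bf_symm[OF assms(1)] by blast
  ultimately have "(\<Sum>i\<in>UNIV. \<Sum>j\<in>UNIV. M$i$j * (Re (x$i) * Im (x$j)) - M$i$j * (Im (x$i) * Re (x$j))) = 0"
    by (simp add: sum_subtractf)
  then show "Im (\<Sum>i\<in>UNIV. \<Sum>j\<in>UNIV. cnj (x$i) * of_real (M$i$j) * x$j) = Im (of_real (u \<bullet> (M *v u) + v \<bullet> (M *v v)))"
    by (simp add: algebra_simps)
qed


lemma roots_real:
  fixes W D :: "real^'n^'n"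
  assumes W: "pos_def W" and D: "symm D"
    and z: "poly (polymat (cm W) (cm D)) z = 0"
  shows "Im z = 0"
proof -
  let ?M = "(\<chi> i j. cm W$i$j + z * cm D$i$j)"
  have "det ?M = 0" using z by (simp add: poly_polymat)
  then obtain x where x0: "x \<noteq> 0" and Mx: "?M *v x = 0" using det0_ker by blast
  define u where "u = (\<chi> i. Re (x$i))"
  define v where "v = (\<chi> i. Im (x$i))"
  define a where "a = u \<bullet> (W *v u) + v \<bullet> (W *v v)"
  define b where "b = u \<bullet> (D *v u) + v \<bullet> (D *v v)"
  have sW: "symm W" using W by (simp add: pos_def_alt)
  have "u \<noteq> 0 \<or> v \<noteq> 0"
  proof (rule ccontr)
    assume "\<not> (u \<noteq> 0 \<or> v \<noteq> 0)"
    then have "x = 0" by (simp add: u_def v_def vec_eq_iff complex_eq_iff)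
    with x0 show False by simp
  qed
  then have a0: "a > 0"
  proof
    assume "u \<noteq> 0"
    then have "u \<bullet> (W *v u) > 0" using W by (simp add: pos_def_alt)
    moreover have "v \<bullet> (W *v v) \<ge> 0" using pos_def_psd[OF W] by (simp add: psd_def)
    ultimately show ?thesis by (simp add: a_def)
  next
    assume "v \<noteq> 0"
    then have "v \<bullet> (W *v v) > 0" using W by (simp add: pos_def_alt)
    moreover have "u \<bullet> (W *v u) \<ge> 0" using pos_def_psd[OF W] by (simp add: psd_def)
    ultimately show ?thesis by (simp add: a_def)
  qed
  have "0 = (\<Sum>i\<in>UNIV. cnj (x$i) * (?M *v x)$i)" using Mx by simp
  also have "\<dots> = (\<Sum>i\<in>UNIV. \<Sum>j\<in>UNIV. cnj (x$i) * of_real (W$i$j) * x$j)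
                 + z * (\<Sum>i\<in>UNIV. \<Sum>j\<in>UNIV. cnj (x$i) * of_real (D$i$j) * x$j)"
    by (simp add: matrix_vector_mult_def cm_def sum_distrib_left sum.distrib[symmetric] algebra_simps)
  also have "\<dots> = of_real a + z * of_real b"
    unfolding a_def b_def u_def v_def using herm_form[OF sW] herm_form[OF D] by simp
  finally have eq: "of_real a + z * of_real b = 0" by simp
  then have "Re z * b = - a" "Im z * b = 0" by (simp_all add: complex_eq_iff)
  then show ?thesis using a0 by auto
qed


lemma real_factor:
  fixes W D :: "real^'n^'n"
  assumes W: "pos_def W" and D: "symm D"
  shows "\<exists>c (m::nat) \<rho>. \<forall>t. det (W + t *\<^sub>R D) = c * (\<Prod>i<m. t - \<rho> i)"
proof -
  let ?P = "polymat (cm W) (cm D)"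
  obtain root where dec: "smult (lead_coeff ?P) (\<Prod>i<degree ?P. [:-root i, 1:]) = ?P"
    using complex_poly_decompose' by blast
  define m where "m = degree ?P"
  define lc where "lc = lead_coeff ?P"
  have pw: "poly ?P w = lc * (\<Prod>i<m. w - root i)" for w
  proof -
    have "poly ?P w = poly (smult (lead_coeff ?P) (\<Prod>i<degree ?P. [:-root i, 1:])) w"
      by (simp only: dec)
    then show ?thesis by (simp add: poly_prod m_def lc_def)
  qed
  have real: "Im (root i) = 0" if "i < m" for i
  proof (rule roots_real[OF W D])
    have "(\<Prod>j<m. root i - root j) = 0" using that by (intro prod_zero) auto
    then show "poly ?P (root i) = 0"
      using pw[of "root i"] by simp
  qed
  define \<rho> where "\<rho> i = Re (root i)" for i
  have rootr: "root i = of_real (\<rho> i)" if "i < m" for i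
    using real[OF that] by (simp add: \<rho>_def complex_eq_iff)
  have fac: "of_real (det (W + t *\<^sub>R D)) = lc * of_real (\<Prod>i<m. t - \<rho> i)" for t
  proof -
    have "of_real (det (W + t *\<^sub>R D)) = poly ?P (of_real t)" by (simp add: poly_PC_real)
    also have "\<dots> = lc * (\<Prod>i<m. of_real t - root i)" by (rule pw)
    also have "(\<Prod>i<m. of_real t - root i) = (\<Prod>i<m. of_real (t - \<rho> i))"
      by (intro prod.cong) (auto simp: rootr)
    finally show ?thesis by simp
  qed
  have d0: "det W \<noteq> 0" using pd_det_nz[OF W] .
  define a where "a = (\<Prod>i<m. (0::real) - \<rho> i)"
  have f0: "of_real (det W) = lc * of_real a" using fac[of 0] by (simp add: a_def)
  then have a0: "a \<noteq> 0" using d0 by auto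
  have lcr: "lc = of_real (det W / a)" using f0 a0 by (simp add: field_simps)
  have "\<forall>t. det (W + t *\<^sub>R D) = det W / a * (\<Prod>i<m. t - \<rho> i)"
  proof
    fix t
    have "complex_of_real (det (W + t *\<^sub>R D)) = of_real (det W / a * (\<Prod>i<m. t - \<rho> i))"
      using fac[of t] lcr by simp
    then show "det (W + t *\<^sub>R D) = det W / a * (\<Prod>i<m. t - \<rho> i)"
      using of_real_eq_iff by blast
  qed
  then show ?thesis by blast
qed





lemma mv_uminus: fixes D :: "real^'n^'n" shows "(- D) *v x = - (D *v x)"
  by (simp add: matrix_vector_mult_def vec_eq_iff sum_negf)

lemma bf_axis: fixes D :: "real^'n^'n" shows "axis i 1 \<bullet> (D *v axis j 1) = D$i$j"
  by (simp add: inner_axis' matrix_vector_mult_basis column_def)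

lemma qf_zero_imp_zero:
  fixes D :: "real^'n^'n"
  assumes D: "symm D" and z: "\<And>y. y \<bullet> (D *v y) = 0"
  shows "D = 0"
proof -
  have "x \<bullet> (D *v y) = 0" for x y
  proof -
    have "(x + y) \<bullet> (D *v (x + y)) = x \<bullet> (D *v x) + x \<bullet> (D *v y) + y \<bullet> (D *v x) + y \<bullet> (D *v y)"
      by (simp add: bf_add_left bf_add_right)
    moreover have "y \<bullet> (D *v x) = x \<bullet> (D *v y)" using bf_symm[OF D] by blast
    ultimately show ?thesis using z[of "x+y"] z[of x] z[of y] by simp
  qed
  then have "D$i$j = 0" for i j using bf_axis[of i D j] by simp
  then show ?thesis by (simp add: vec_eq_iff)
qed

lemma exists_real_root:
  fixes W D :: "real^'n^'n"
  assumes W: "pos_def W" and D: "symm D" and D0: "D \<noteq> 0"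
  shows "\<exists>t. det (W + t *\<^sub>R D) = 0"
proof -
  obtain l x where x0: "x \<noteq> 0" and Dx: "D *v x = l *\<^sub>R (W *v x)"
      and le: "\<And>y. y \<bullet> (D *v y) \<le> l * (y \<bullet> (W *v y))"
    using rayleigh[OF W D] by blast
  have D': "symm (-D)" using D by (simp add: symm_def)
  obtain l' x' where x0': "x' \<noteq> 0" and Dx': "(-D) *v x' = l' *\<^sub>R (W *v x')"
      and le': "\<And>y. y \<bullet> ((-D) *v y) \<le> l' * (y \<bullet> (W *v y))"
    using rayleigh[OF W D'] by blast
  show ?thesis
  proof (cases "l = 0")
    case False
    have "(W + (- 1 / l) *\<^sub>R D) *v x = W *v x + (- 1 / l) *\<^sub>R (D *v x)"
      by (simp only: matrix_vector_mult_add_rdistrib scaleR_matrix_vector_assoc)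
    also have "\<dots> = 0" using False Dx by simp
    finally have "(W + (- 1 / l) *\<^sub>R D) *v x = 0" .
    then show ?thesis using ker_det0 x0 by blast
  next
    case l0: True
    show ?thesis
    proof (cases "l' = 0")
      case False
      have "D *v x' = (- l') *\<^sub>R (W *v x')" using Dx' 
        by (simp add: mv_uminus) (metis minus_minus)
      have "(W + (1 / l') *\<^sub>R D) *v x' = W *v x' + (1 / l') *\<^sub>R (D *v x')"
        by (simp only: matrix_vector_mult_add_rdistrib scaleR_matrix_vector_assoc)
      also have "\<dots> = 0" using False \<open>D *v x' = (- l') *\<^sub>R (W *v x')\<close> by simp
      finally have "(W + (1 / l') *\<^sub>R D) *v x' = 0" .
      then show ?thesis using ker_det0 x0' by blast
    next
      case True
      have "y \<bullet> (D *v y) = 0" for y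
      proof -
        have "y \<bullet> (D *v y) \<le> 0" using le[of y] l0 by simp
        moreover have "y \<bullet> ((-D) *v y) \<le> 0" using le'[of y] True by simp
        then have "y \<bullet> (D *v y) \<ge> 0" by (simp add: mv_uminus)
        ultimately show ?thesis by simp
      qed
      then have "D = 0" using qf_zero_imp_zero[OF D] by blast
      with D0 show ?thesis by simp
    qed
  qed
qed

lemma det_mid:
  fixes W1 W2 :: "real^'n^'n"
  assumes W1: "pos_def W1" and W2: "pos_def W2" and ne: "W1 \<noteq> W2"
  shows "det W1 * det W2 < (det ((1/2) *\<^sub>R (W1 + W2)))^2"
proof -
  define D where "D = W2 - W1"
  have sD: "symm D" using W1 W2 by (simp add: D_def symm_def pos_def_alt)
  have D0: "D \<noteq> 0" using ne by (simp add: D_def)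
  define \<phi> where "\<phi> t = det (W1 + t *\<^sub>R D)" for t
  obtain c m \<rho> where fac: "\<And>t. \<phi> t = c * (\<Prod>i<(m::nat). t - \<rho> i)"
    using real_factor[OF W1 sD] unfolding \<phi>_def by blast
  have comb: "W1 + t *\<^sub>R D = (1 - t) *\<^sub>R W1 + t *\<^sub>R W2" for t
    by (simp add: D_def algebra_simps)
  have nz: "\<phi> t \<noteq> 0" if "0 \<le> t" "t \<le> 1" for t
    unfolding \<phi>_def comb using pd_det_nz[OF pd_comb[OF W1 W2 that]] .
  have p0: "\<phi> 0 = det W1" by (simp add: \<phi>_def)
  have p1: "\<phi> 1 = det W2" by (simp add: \<phi>_def D_def)
  have ph: "\<phi> (1/2) = det ((1/2) *\<^sub>R (W1 + W2))"
    unfolding \<phi>_def comb by (simp add: algebra_simps)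
  have c0: "c \<noteq> 0" using nz[of 0] fac[of 0] by auto
  have rho_out: "\<rho> i < 0 \<or> \<rho> i > 1" if "i < m" for i
  proof (rule ccontr)
    assume "\<not> (\<rho> i < 0 \<or> \<rho> i > 1)"
    then have "\<phi> (\<rho> i) \<noteq> 0" using nz by auto
    moreover have "(\<Prod>j<m. \<rho> i - \<rho> j) = 0" using that by (intro prod_zero) auto
    ultimately show False using fac[of "\<rho> i"] by simp
  qed
  have m0: "m > 0"
  proof (rule ccontr)
    assume "\<not> m > 0"
    then have "\<phi> t = c" for t using fac[of t] by simp
    moreover obtain t where "\<phi> t = 0" using exists_real_root[OF W1 sD D0] unfolding \<phi>_def by blast
    ultimately show False using c0 by simp
  qed
  define f where "f i = (0 - \<rho> i) * (1 - \<rho> i)" for i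
  define g where "g i = (1/2 - \<rho> i) * (1/2 - \<rho> i)" for i
  have "(\<Prod>i<m. f i) < (\<Prod>i<m. g i)"
  proof (rule prod_mono_strict[of 0])
    show "0 \<in> {..<m}" using m0 by simp
    show "f 0 < g 0" by (simp add: f_def g_def algebra_simps)
    show "finite {..<m}" by simp
    fix i assume "i \<in> {..<m}"
    then have r: "\<rho> i < 0 \<or> \<rho> i > 1" using rho_out by simp
    have "f i > 0"
    proof (cases "\<rho> i < 0")
      case True
      then have "0 - \<rho> i > 0" "1 - \<rho> i > 0" by auto
      then show ?thesis unfolding f_def by (rule mult_pos_pos)
    next
      case False
      then have "0 - \<rho> i < 0" "1 - \<rho> i < 0" using r by auto
      then show ?thesis unfolding f_def by (rule mult_neg_neg)
    qed
    moreover have "f i \<le> g i" by (simp add: f_def g_def algebra_simps)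
    ultimately show "0 \<le> f i \<and> f i \<le> g i" by simp
    show "0 < g i" using \<open>f i > 0\<close> \<open>f i \<le> g i\<close> by simp
  qed
  then have "c * c * (\<Prod>i<m. f i) < c * c * (\<Prod>i<m. g i)"
  proof -
    have "c * c > 0" using c0 by (metis not_real_square_gt_zero)
    then show ?thesis using \<open>(\<Prod>i<m. f i) < (\<Prod>i<m. g i)\<close> by (simp add: mult_strict_left_mono)
  qed
  moreover have "\<phi> 0 * \<phi> 1 = c * c * (\<Prod>i<m. f i)"
    unfolding fac f_def prod.distrib by (simp only: mult_ac)
  moreover have "(\<phi> (1/2))^2 = c * c * (\<Prod>i<m. g i)"
    unfolding fac g_def prod.distrib power2_eq_square by (simp only: mult_ac)
  ultimately show ?thesis using p0 p1 ph by simp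
qed



lemma matrix_inv_props:
  fixes M :: "real^'n^'n"
  assumes "invertible M"
  shows "M ** matrix_inv M = mat 1" "matrix_inv M ** M = mat 1"
proof -
  have "\<exists>A'. M ** A' = mat 1 \<and> A' ** M = mat 1" using assms by (simp add: invertible_def)
  then have "M ** matrix_inv M = mat 1 \<and> matrix_inv M ** M = mat 1"
    unfolding matrix_inv_def by (rule someI_ex)
  then show "M ** matrix_inv M = mat 1" "matrix_inv M ** M = mat 1" by auto
qed

lemma pd_invertible: fixes M :: "real^'n^'n" shows "pos_def M \<Longrightarrow> invertible M"
  using pd_det_nz invertible_det_nz by blast

lemma var_inv:
  fixes W :: "real^'n^'n"
  assumes W: "pos_def W"
  defines "P \<equiv> matrix_inv W"
  shows "2 * (x \<bullet> y) - y \<bullet> (W *v y) \<le> x \<bullet> (P *v x)"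
    and "2 * (x \<bullet> y) - y \<bullet> (W *v y) = x \<bullet> (P *v x) \<Longrightarrow> W *v y = x"
proof -
  have inv: "W ** P = mat 1" "P ** W = mat 1" using matrix_inv_props[OF pd_invertible[OF W]] by (auto simp: P_def)
  define z where "z = P *v x"
  have Wz: "W *v z = x" by (simp add: z_def matrix_vector_mul_assoc inv)
  have sW: "symm W" using W by (simp add: pos_def_alt)
  have xz: "x \<bullet> (P *v x) = z \<bullet> (W *v z)"
  proof -
    have "z \<bullet> (W *v z) = z \<bullet> x" using Wz by simp
    then show ?thesis by (simp add: z_def inner_commute)
  qed
  have "(y - z) \<bullet> (W *v (y - z)) = y \<bullet> (W *v y) - 2 * (y \<bullet> (W *v z)) + z \<bullet> (W *v z)"
  proof -
    have "z \<bullet> (W *v y) = y \<bullet> (W *v z)" using bf_symm[OF sW] by blast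
    then show ?thesis by (simp add: matrix_vector_mult_diff_distrib inner_diff_left inner_diff_right)
  qed
  then have key: "x \<bullet> (P *v x) - (2 * (x \<bullet> y) - y \<bullet> (W *v y)) = (y - z) \<bullet> (W *v (y - z))"
    using xz Wz by (simp add: inner_commute)
  have "(y - z) \<bullet> (W *v (y - z)) \<ge> 0" using pos_def_psd[OF W] by (simp add: psd_def)
  then show "2 * (x \<bullet> y) - y \<bullet> (W *v y) \<le> x \<bullet> (P *v x)" using key by simp
  assume "2 * (x \<bullet> y) - y \<bullet> (W *v y) = x \<bullet> (P *v x)"
  then have "(y - z) \<bullet> (W *v (y - z)) = 0" using key by simp
  then have "y - z = 0" using W unfolding pos_def_alt by (metis less_irrefl)
  then show "W *v y = x" using Wz by simp
qed

definition FF :: "real^'n^'n \<Rightarrow> ('n \<Rightarrow> real^'n) \<Rightarrow> real" where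
  "FF M Y = (\<Sum>j\<in>UNIV. 2 * (Y j $ j) - Y j \<bullet> (M *v Y j))"

lemma trace_as_sum: fixes P :: "real^'n^'n" shows "trace P = (\<Sum>j\<in>UNIV. axis j 1 \<bullet> (P *v axis j 1))"
  by (simp add: trace_def bf_axis)

lemma FF_le:
  fixes W :: "real^'n^'n"
  assumes W: "pos_def W"
  shows "FF W Y \<le> trace (matrix_inv W)"
  unfolding FF_def trace_as_sum
proof (rule sum_mono)
  fix j
  show "2 * Y j $ j - Y j \<bullet> (W *v Y j) \<le> axis j 1 \<bullet> (matrix_inv W *v axis j 1)"
    using var_inv(1)[OF W, of "axis j 1" "Y j"] by (simp add: inner_axis')
qed

lemma FF_eq:
  fixes W :: "real^'n^'n"
  assumes W: "pos_def W"
  shows "FF W (\<lambda>j. matrix_inv W *v axis j 1) = trace (matrix_inv W)"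
proof -
  have inv: "W ** matrix_inv W = mat 1" using matrix_inv_props[OF pd_invertible[OF W]] by auto
  have sW: "symm W" using W by (simp add: pos_def_alt)
  have "2 * (matrix_inv W *v axis j 1) $ j - (matrix_inv W *v axis j 1) \<bullet> (W *v (matrix_inv W *v axis j 1))
        = axis j 1 \<bullet> (matrix_inv W *v axis j 1)" for j
  proof -
    have "W *v (matrix_inv W *v axis j 1) = axis j 1" by (simp add: matrix_vector_mul_assoc inv)
    then show ?thesis by (simp add: inner_axis' inner_commute)
  qed
  then show ?thesis unfolding FF_def trace_as_sum by simp
qed

lemma FF_strict:
  fixes W :: "real^'n^'n"
  assumes W: "pos_def W" and ne: "\<exists>j. W *v Y j \<noteq> axis j 1"
  shows "FF W Y < trace (matrix_inv W)"
  unfolding FF_def trace_as_sum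
proof (rule sum_strict_mono_ex1)
  show "\<forall>j\<in>UNIV. 2 * Y j $ j - Y j \<bullet> (W *v Y j) \<le> axis j 1 \<bullet> (matrix_inv W *v axis j 1)"
  proof
    fix j show "2 * Y j $ j - Y j \<bullet> (W *v Y j) \<le> axis j 1 \<bullet> (matrix_inv W *v axis j 1)"
      using var_inv(1)[OF W, of "axis j 1" "Y j"] by (simp add: inner_axis')
  qed
  obtain j where j: "W *v Y j \<noteq> axis j 1" using ne by blast
  have "2 * Y j $ j - Y j \<bullet> (W *v Y j) \<noteq> axis j 1 \<bullet> (matrix_inv W *v axis j 1)"
    using var_inv(2)[OF W, of "axis j 1" "Y j"] j by (auto simp: inner_axis')
  moreover have "2 * Y j $ j - Y j \<bullet> (W *v Y j) \<le> axis j 1 \<bullet> (matrix_inv W *v axis j 1)"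
    using var_inv(1)[OF W, of "axis j 1" "Y j"] by (simp add: inner_axis')
  ultimately have "2 * Y j $ j - Y j \<bullet> (W *v Y j) < axis j 1 \<bullet> (matrix_inv W *v axis j 1)"
    by simp
  then show "\<exists>j\<in>UNIV. 2 * Y j $ j - Y j \<bullet> (W *v Y j) < axis j 1 \<bullet> (matrix_inv W *v axis j 1)"
    by blast
qed simp

lemma FF_affine:
  fixes A B :: "real^'n^'n"
  shows "FF ((1/2) *\<^sub>R (A + B)) Y = (1/2) * FF A Y + (1/2) * FF B Y"
  unfolding FF_def by (simp add: bf_matadd bf_matscale sum.distrib sum_distrib_left algebra_simps sum_subtractf)

lemma right_inv_eq:
  fixes W M :: "real^'n^'n"
  assumes W: "pos_def W" and h: "\<And>j. M *v (matrix_inv W *v axis j 1) = axis j 1"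
  shows "M = W"
proof -
  have inv: "matrix_inv W ** W = mat 1" using matrix_inv_props[OF pd_invertible[OF W]] by auto
  have "column j (M ** matrix_inv W) = column j (mat 1)" for j
    using h[of j] by (simp add: matrix_vector_mult_basis[symmetric] matrix_vector_mul_assoc)
  then have MP: "M ** matrix_inv W = mat 1" by (simp add: column_def vec_eq_iff)
  have "M = M ** (matrix_inv W ** W)" by (simp add: inv)
  also have "\<dots> = W" by (simp add: matrix_mul_assoc MP)
  finally show ?thesis .
qed



locale gram =
  fixes B :: "'n::finite \<Rightarrow> real^'n^'n"
  assumes symB: "\<And>i. symm (B i)"
    and psdB: "\<And>i x. x \<bullet> (B i *v x) \<ge> 0"
    and posB: "\<And>x. x \<noteq> 0 \<Longrightarrow> \<exists>i. x \<bullet> (B i *v x) > 0"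
    and injB: "\<And>p. (\<Sum>i\<in>UNIV. p$i *\<^sub>R B i) = 0 \<Longrightarrow> p = 0"
begin

definition W :: "real^'n \<Rightarrow> real^'n^'n" where "W p = (\<Sum>i\<in>UNIV. p$i *\<^sub>R B i)"

lemma W_entry: "W p $ a $ b = (\<Sum>i\<in>UNIV. p$i * B i $ a $ b)"
  by (simp add: W_def)

lemma W_bf: "x \<bullet> (W p *v y) = (\<Sum>i\<in>UNIV. p$i * (x \<bullet> (B i *v y)))"
proof -
  have "x \<bullet> (W p *v y) = (\<Sum>a\<in>UNIV. \<Sum>b\<in>UNIV. \<Sum>i\<in>UNIV. p$i * (x$a * B i $a$b * y$b))"
    unfolding bf_sum W_entry by (simp add: sum_distrib_left sum_distrib_right mult_ac)
  also have "\<dots> = (\<Sum>a\<in>UNIV. \<Sum>i\<in>UNIV. \<Sum>b\<in>UNIV. p$i * (x$a * B i $a$b * y$b))"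
    by (rule sum.cong[OF refl], rule sum.swap)
  also have "\<dots> = (\<Sum>i\<in>UNIV. \<Sum>a\<in>UNIV. \<Sum>b\<in>UNIV. p$i * (x$a * B i $a$b * y$b))"
    by (rule sum.swap)
  also have "\<dots> = (\<Sum>i\<in>UNIV. p$i * (x \<bullet> (B i *v y)))"
    unfolding bf_sum by (simp add: sum_distrib_left)
  finally show ?thesis .
qed

lemma W_symm: "symm (W p)"
  using symB by (simp add: symm_def W_entry)

lemma W_add: "W (p + q) = W p + W q"
  by (simp add: W_def scaleR_add_left sum.distrib)

lemma W_scale: "W (c *\<^sub>R p) = c *\<^sub>R W p"
  by (simp add: W_def scaleR_sum_right)

lemma W_diff: "W (p - q) = W p - W q"
  by (simp add: W_def scaleR_diff_left sum_subtractf)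

lemma W_inj: "W p = W q \<Longrightarrow> p = q"
  using injB[of "p - q"] W_diff[of p q] by (simp add: W_def)

lemma simplex_mem: "p \<in> std_simplex \<longleftrightarrow> sum (\<lambda>i. p $ i) UNIV = 1 \<and> (\<forall>i. p $ i \<ge> 0)"
  by (simp add: std_simplex_def)

lemma W_psd: "p \<in> std_simplex \<Longrightarrow> psd (W p)"
  unfolding psd_def using W_symm psdB by (auto simp: W_bf simplex_mem intro!: sum_nonneg)

lemma simplex_mid: "p \<in> std_simplex \<Longrightarrow> q \<in> std_simplex \<Longrightarrow> (1/2) *\<^sub>R (p + q) \<in> std_simplex"
  by (simp add: simplex_mem sum.distrib sum_divide_distrib[symmetric])

lemma W_mid: "W ((1/2) *\<^sub>R (p + q)) = (1/2) *\<^sub>R (W p + W q)"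
  by (simp add: W_scale W_add)

definition p0 :: "real^'n" where "p0 = (\<chi> i. 1 / real CARD('n))"

lemma p0_simplex: "p0 \<in> std_simplex"
  by (simp add: simplex_mem p0_def)

lemma W_p0_pd: "pos_def (W p0)"
proof -
  have "x \<bullet> (W p0 *v x) > 0" if x0: "x \<noteq> 0" for x
  proof -
    obtain i where i: "x \<bullet> (B i *v x) > 0" using posB[OF x0] by blast
    have "x \<bullet> (W p0 *v x) = (\<Sum>j\<in>UNIV. (1 / real CARD('n)) * (x \<bullet> (B j *v x)))"
      by (simp add: W_bf p0_def)
    also have "\<dots> > 0"
    proof (rule sum_pos2[of _ i])
      show "0 < 1 / real CARD('n) * (x \<bullet> (B i *v x))" using i by simp
      show "\<And>j. j \<in> UNIV \<Longrightarrow> 0 \<le> 1 / real CARD('n) * (x \<bullet> (B j *v x))" using psdB by simp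
    qed auto
    finally show ?thesis .
  qed
  then show ?thesis using W_symm by (simp add: pos_def_alt)
qed

lemma simplex_compact: "compact (std_simplex :: (real^'n) set)"
proof -
  have cl: "closed (std_simplex :: (real^'n) set)"
    unfolding std_simplex_def
    by (intro closed_Collect_conj closed_Collect_all closed_Collect_eq closed_Collect_le continuous_intros)
  have "std_simplex \<subseteq> cbox (0::real^'n) (\<chi> i. 1)"
  proof
    fix p :: "real^'n" assume p: "p \<in> std_simplex"
    have "p $ i \<le> 1" for i
    proof -
      have "p $ i \<le> sum (\<lambda>i. p $ i) UNIV"
        using p by (intro member_le_sum) (auto simp: simplex_mem)
      then show ?thesis using p by (simp add: simplex_mem)
    qed
    then show "p \<in> cbox 0 (\<chi> i. 1)" using p by (simp add: mem_box_cart simplex_mem)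
  qed
  then have "bounded (std_simplex :: (real^'n) set)" using bounded_cbox bounded_subset by blast
  with cl show ?thesis by (simp add: compact_eq_bounded_closed)
qed

lemma cont_detW: "continuous_on S (\<lambda>p. det (W p))"
  unfolding det_def W_entry by (intro continuous_intros)

lemma cont_FF: "continuous_on S (\<lambda>p. FF (W p) Y)"
  unfolding FF_def W_bf by (intro continuous_intros)

lemma pd_of_psd_det:
  assumes "psd M" "det M \<noteq> 0" shows "pos_def M"
proof -
  have "x \<bullet> (M *v x) > 0" if "x \<noteq> 0" for x
  proof (rule ccontr)
    assume "\<not> x \<bullet> (M *v x) > 0"
    then have "x \<bullet> (M *v x) = 0" using assms(1) by (simp add: psd_def) (meson antisym not_less)
    then have "M *v x = 0" using psd_null assms(1) by blast
    then show False using ker_det0 that assms(2) by blast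
  qed
  then show ?thesis using assms(1) by (simp add: pos_def_alt psd_def)
qed

end



context gram begin

lemma f_unique: "unique_minimizer (\<lambda>p. - ln (det (W p))) ({p. pos_def (W p)} \<inter> std_simplex)"
proof -
  let ?S = "{p. pos_def (W p)} \<inter> std_simplex"
  let ?f = "\<lambda>p. - ln (det (W p))"
  obtain ps where ps: "ps \<in> std_simplex" and psmax: "\<And>q. q \<in> std_simplex \<Longrightarrow> det (W q) \<le> det (W ps)"
    using continuous_attains_sup[OF simplex_compact _ cont_detW] p0_simplex by blast
  have "det (W p0) > 0" using pd_det_pos[OF W_p0_pd] .
  then have dps: "det (W ps) > 0" using psmax[OF p0_simplex] by linarith
  have pdps: "pos_def (W ps)" using pd_of_psd_det[OF W_psd[OF ps]] dps by simp
  have psS: "ps \<in> ?S" using ps pdps by simp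
  have psmin: "\<forall>q\<in>?S. ?f ps \<le> ?f q"
  proof
    fix q assume q: "q \<in> ?S"
    then have "det (W q) > 0" using pd_det_pos by blast
    moreover have "det (W q) \<le> det (W ps)" using q psmax by blast
    ultimately show "?f ps \<le> ?f q" using dps by simp
  qed
  have uniq: "p1 = p2" if p1: "p1 \<in> ?S" "\<forall>q\<in>?S. ?f p1 \<le> ?f q" and p2: "p2 \<in> ?S" "\<forall>q\<in>?S. ?f p2 \<le> ?f q" for p1 p2
  proof (rule ccontr)
    assume ne: "p1 \<noteq> p2"
    have pd1: "pos_def (W p1)" and pd2: "pos_def (W p2)" using p1 p2 by auto
    have d1: "det (W p1) > 0" and d2: "det (W p2) > 0" using pd_det_pos pd1 pd2 by auto
    have "?f p1 = ?f p2" using p1 p2 by (meson antisym)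
    then have deq: "det (W p1) = det (W p2)" using d1 d2 by simp
    define m where "m = (1/2) *\<^sub>R (p1 + p2)"
    have mS: "m \<in> std_simplex" unfolding m_def by (rule simplex_mid) (use p1 p2 in auto)
    have Wm: "W m = (1 - 1/2) *\<^sub>R W p1 + (1/2) *\<^sub>R W p2" unfolding m_def W_mid by (simp add: scaleR_add_right)
    have pdm: "pos_def (W m)" unfolding Wm by (rule pd_comb[OF pd1 pd2]) auto
    have dm: "det (W m) > 0" using pd_det_pos[OF pdm] .
    have "W p1 \<noteq> W p2" using ne W_inj by blast
    then have "det (W p1) * det (W p2) < (det ((1/2) *\<^sub>R (W p1 + W p2)))^2"
      using det_mid[OF pd1 pd2] by blast
    also have "(1/2) *\<^sub>R (W p1 + W p2) = W m" by (simp add: m_def W_mid)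
    finally have "(det (W p1))^2 < (det (W m))^2" using deq by (simp add: power2_eq_square)
    then have "det (W p1) < det (W m)" using dm by (meson power_less_imp_less_base less_imp_le)
    then have "?f m < ?f p1" using d1 by simp
    moreover have "m \<in> ?S" using mS pdm by simp
    then have "?f p1 \<le> ?f m" using p1(2) by blast
    ultimately show False by linarith
  qed
  show ?thesis unfolding unique_minimizer_def
    using psS psmin uniq by blast
qed

lemma bounded_FF_pd:
  assumes p: "p \<in> std_simplex" and bnd: "\<And>Y. FF (W p) Y \<le> c"
  shows "pos_def (W p)"
proof -
  have psdp: "psd (W p)" using W_psd[OF p] .
  have "x \<bullet> (W p *v x) > 0" if x0: "x \<noteq> 0" for x
  proof (rule ccontr)
    assume "\<not> x \<bullet> (W p *v x) > 0"
    then have "x \<bullet> (W p *v x) = 0" using psdp by (simp add: psd_def) (meson antisym not_less)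
    then have Wx: "W p *v x = 0" using psd_null psdp by blast
    obtain i where xi: "x $ i \<noteq> 0" using x0 by (auto simp: vec_eq_iff)
    define s where "s = (\<bar>c\<bar> + 1) / (2 * x $ i)"
    define Y where "Y j = (if j = i then s *\<^sub>R x else 0)" for j
    have "FF (W p) Y = (\<Sum>j\<in>UNIV. if j = i then 2 * (s * x $ i) else 0)"
      unfolding FF_def
    proof (rule sum.cong[OF refl])
      fix j
      show "2 * Y j $ j - Y j \<bullet> (W p *v Y j) = (if j = i then 2 * (s * x $ i) else 0)"
        by (simp add: Y_def Wx matrix_vector_mult_scaleR)
    qed
    also have "\<dots> = 2 * (s * x $ i)" by simp
    also have "\<dots> = \<bar>c\<bar> + 1" using xi by (simp add: s_def)
    finally have "FF (W p) Y = \<bar>c\<bar> + 1" .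
    with bnd[of Y] show False by simp
  qed
  then show ?thesis using W_symm by (simp add: pos_def_alt)
qed

lemma g_unique: "unique_minimizer (\<lambda>p. trace (matrix_inv (W p))) ({p. pos_def (W p)} \<inter> std_simplex)"
proof -
  let ?S = "{p. pos_def (W p)} \<inter> std_simplex"
  let ?g = "\<lambda>p. trace (matrix_inv (W p))"
  define C where "C q = std_simplex \<inter> (\<Inter>Y. {p. FF (W p) Y \<le> ?g q})" for q
  have p0S: "p0 \<in> ?S" using W_p0_pd p0_simplex by simp
  have clY: "closed {p. FF (W p) Y \<le> c}" for Y c
    by (intro closed_Collect_le cont_FF continuous_intros)
  have clC: "closed (C q)" for q
    unfolding C_def
    by (intro closed_Int compact_imp_closed[OF simplex_compact] closed_INT ballI clY)
  have "\<Inter>(C ` ?S) \<noteq> {}"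
  proof (rule closed_fip_Heine_Borel)
    show "C p0 \<in> C ` ?S" using p0S by blast
    show "bounded (C p0)" unfolding C_def
      using compact_imp_bounded[OF simplex_compact] bounded_subset by blast
    show "\<And>T. T \<in> C ` ?S \<Longrightarrow> closed T" using clC by blast
    fix F' assume F': "finite F'" "F' \<subseteq> C ` ?S"
    then obtain Q where Q: "Q \<subseteq> ?S" "finite Q" "F' = C ` Q" by (meson finite_subset_image)
    show "\<Inter>F' \<noteq> {}"
    proof (cases "Q = {}")
      case True then show ?thesis using Q by simp
    next
      case False
      define v where "v = Min (?g ` Q)"
      have "v \<in> ?g ` Q" using False Q by (simp add: v_def)
      then obtain qs where qs: "qs \<in> Q" "?g qs = v" by blast
      have vle: "v \<le> ?g q" if "q \<in> Q" for q using Q that by (simp add: v_def)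
      have "qs \<in> C q" if "q \<in> Q" for q
      proof -
        have qsS: "qs \<in> ?S" using qs Q by blast
        have "FF (W qs) Y \<le> ?g q" for Y
          using FF_le[of "W qs" Y] qsS vle[OF that] qs by simp
        then show ?thesis using qsS by (simp add: C_def)
      qed
      then show ?thesis using Q by blast
    qed
  qed
  then obtain pg where pg: "\<And>q. q \<in> ?S \<Longrightarrow> pg \<in> C q" by blast
  have pgC0: "pg \<in> C p0" using pg p0S .
  then have pgD: "pg \<in> std_simplex" and "\<And>Y. FF (W pg) Y \<le> ?g p0" by (auto simp: C_def)
  then have pdpg: "pos_def (W pg)" using bounded_FF_pd by blast
  have pgS: "pg \<in> ?S" using pdpg pgD by simp
  have pgmin: "\<forall>q\<in>?S. ?g pg \<le> ?g q"
  proof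
    fix q assume "q \<in> ?S"
    then have "pg \<in> C q" by (rule pg)
    then have "FF (W pg) (\<lambda>j. matrix_inv (W pg) *v axis j 1) \<le> ?g q" by (auto simp: C_def)
    then show "?g pg \<le> ?g q" using FF_eq[OF pdpg] by simp
  qed
  have uniq: "p1 = p2" if p1: "p1 \<in> ?S" "\<forall>q\<in>?S. ?g p1 \<le> ?g q" and p2: "p2 \<in> ?S" "\<forall>q\<in>?S. ?g p2 \<le> ?g q" for p1 p2
  proof (rule ccontr)
    assume ne: "p1 \<noteq> p2"
    have pd1: "pos_def (W p1)" and pd2: "pos_def (W p2)" using p1 p2 by auto
    have geq: "?g p1 = ?g p2" using p1 p2 by (meson antisym)
    define m where "m = (1/2) *\<^sub>R (p1 + p2)"
    have mS: "m \<in> std_simplex" unfolding m_def by (rule simplex_mid) (use p1 p2 in auto)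
    have Wm: "W m = (1 - 1/2) *\<^sub>R W p1 + (1/2) *\<^sub>R W p2" unfolding m_def W_mid by (simp add: scaleR_add_right)
    have pdm: "pos_def (W m)" unfolding Wm by (rule pd_comb[OF pd1 pd2]) auto
    define Ym where "Ym = (\<lambda>j. matrix_inv (W m) *v axis j 1)"
    have gm: "?g m = (1/2) * FF (W p1) Ym + (1/2) * FF (W p2) Ym"
    proof -
      have "?g m = FF (W m) Ym" using FF_eq[OF pdm] by (simp add: Ym_def)
      also have "FF (W m) Ym = (1/2) * FF (W p1) Ym + (1/2) * FF (W p2) Ym"
        unfolding m_def W_mid by (rule FF_affine)
      finally show ?thesis .
    qed
    have le1: "FF (W p1) Ym \<le> ?g p1" using FF_le[OF pd1] .
    have le2: "FF (W p2) Ym \<le> ?g p2" using FF_le[OF pd2] .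
    have "W p1 \<noteq> W p2" using ne W_inj by blast
    then have "W p1 \<noteq> W m \<or> W p2 \<noteq> W m" by metis
    then have "FF (W p1) Ym < ?g p1 \<or> FF (W p2) Ym < ?g p2"
    proof
      assume "W p1 \<noteq> W m"
      then have "\<exists>j. W p1 *v Ym j \<noteq> axis j 1" using right_inv_eq[OF pdm, of "W p1"] by (auto simp: Ym_def)
      then show ?thesis using FF_strict[OF pd1] by blast
    next
      assume "W p2 \<noteq> W m"
      then have "\<exists>j. W p2 *v Ym j \<noteq> axis j 1" using right_inv_eq[OF pdm, of "W p2"] by (auto simp: Ym_def)
      then show ?thesis using FF_strict[OF pd2] by blast
    qed
    then have "?g m < ?g p1" using gm le1 le2 geq by auto
    moreover have "m \<in> ?S" using mS pdm by simp
    then have "?g p1 \<le> ?g m" using p1(2) by blast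
    ultimately show False by linarith
  qed
  show ?thesis unfolding unique_minimizer_def
    using pgS pgmin uniq by blast
qed

end





definition asum :: "real^'n^'n \<Rightarrow> real" where
  "asum A = (\<Sum>a\<in>UNIV. \<Sum>b\<in>UNIV. \<bar>A$a$b\<bar>)"

lemma asum_nonneg: "asum A \<ge> 0"
  by (simp add: asum_def sum_nonneg)

lemma entry_le_asum: "\<bar>A$a$b\<bar> \<le> asum A"
proof -
  have "\<bar>A$a$b\<bar> \<le> (\<Sum>b\<in>UNIV. \<bar>A$a$b\<bar>)" by (rule member_le_sum) auto
  also have "\<dots> \<le> asum A" unfolding asum_def by (rule member_le_sum) (auto intro: sum_nonneg)
  finally show ?thesis .
qed

lemma row_le_asum: "(\<Sum>c\<in>UNIV. \<bar>A$a$c\<bar>) \<le> asum A"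
  unfolding asum_def by (rule member_le_sum) (auto intro: sum_nonneg)

lemma mpow_bound: "\<bar>mpow A k $ a $ b\<bar> \<le> (asum A + 1) ^ k"
proof (induction k arbitrary: a b)
  case 0
  then show ?case by (simp add: mat_def)
next
  case (Suc k)
  have "\<bar>mpow A (Suc k) $ a $ b\<bar> = \<bar>\<Sum>c\<in>UNIV. A$a$c * mpow A k $c$b\<bar>"
    by (simp add: matrix_matrix_mult_def)
  also have "\<dots> \<le> (\<Sum>c\<in>UNIV. \<bar>A$a$c\<bar> * (asum A + 1) ^ k)"
    by (rule order_trans[OF sum_abs]) (auto intro!: sum_mono mult_left_mono simp: abs_mult Suc.IH)
  also have "\<dots> = (\<Sum>c\<in>UNIV. \<bar>A$a$c\<bar>) * (asum A + 1) ^ k" by (simp add: sum_distrib_right)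
  also have "\<dots> \<le> (asum A + 1) * (asum A + 1) ^ k"
    using row_le_asum[of A a] asum_nonneg[of A] by (intro mult_right_mono) auto
  finally show ?case by simp
qed

definition ecoef :: "real^'n^'n \<Rightarrow> 'n \<Rightarrow> 'n \<Rightarrow> nat \<Rightarrow> real" where
  "ecoef A a b k = mpow A k $ a $ b / fact k"

lemma ecoef_summable:
  fixes z :: "'a::{real_normed_field,banach}"
  shows "summable (\<lambda>k. of_real (ecoef A a b k) * z ^ k)"
proof (rule summable_comparison_test)
  let ?K = "(asum A + 1) * norm z"
  show "summable (\<lambda>k. ?K ^ k / fact k)"
    using summable_exp[of ?K] by (simp add: divide_inverse mult.commute)
  show "\<exists>N. \<forall>k\<ge>N. norm (of_real (ecoef A a b k) * z ^ k) \<le> ?K ^ k / fact k"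
  proof (intro exI allI impI)
    fix k :: nat
    have "norm (of_real (ecoef A a b k) * z ^ k) = \<bar>mpow A k $ a $ b\<bar> / fact k * norm z ^ k"
      by (simp add: ecoef_def norm_mult norm_power norm_divide)
    also have "\<dots> \<le> (asum A + 1) ^ k / fact k * norm z ^ k"
      by (intro mult_right_mono divide_right_mono mpow_bound) auto
    also have "\<dots> = ?K ^ k / fact k" by (simp add: power_mult_distrib)
    finally show "norm (of_real (ecoef A a b k) * z ^ k) \<le> ?K ^ k / fact k" .
  qed
qed

lemma mexp_sums: "(\<lambda>k. ((t ^ k) / fact k) *\<^sub>R mpow A k) sums (\<chi> a b. \<Sum>k. ecoef A a b k * t ^ k)"
proof -
  have "(\<lambda>k. ecoef A a b k * t ^ k) sums (\<Sum>k. ecoef A a b k * t ^ k)" for a b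
    using ecoef_summable[of A a b t] by (simp add: summable_sums)
  then have c: "(\<lambda>n. \<Sum>k<n. t ^ k * mpow A k $ a $ b / fact k) \<longlonglongrightarrow> (\<Sum>k. ecoef A a b k * t ^ k)" for a b
    by (simp add: sums_def ecoef_def algebra_simps)
  show ?thesis unfolding sums_def
    by (intro vec_tendstoI) (simp add: c)
qed

lemma mexp_entry: "mexp t A $ a $ b = (\<Sum>k. ecoef A a b k * t ^ k)"
proof -
  have "mexp t A = (\<chi> a b. \<Sum>k. ecoef A a b k * t ^ k)"
    using sums_unique[OF mexp_sums[of t A]] by (simp add: mexp_def)
  then show ?thesis by simp
qed

lemma mpow_commute: "A ** mpow A k = mpow A k ** A"
  by (induction k) (simp_all add: matrix_mul_assoc)

lemma mpow_transpose: "mpow (transpose A) k = transpose (mpow A k)"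
  by (induction k) (simp_all add: matrix_transpose_mul mpow_commute)

lemma mexp_transpose_entry: "mexp t (transpose A) $ a $ b = mexp t A $ b $ a"
  unfolding mexp_entry ecoef_def mpow_transpose by (simp add: transpose_def)

lemma integrand_entry:
  "(mexp t A ** outer (ebasis j) (ebasis j) ** mexp t (transpose A)) $ a $ b
     = mexp t A $ a $ j * mexp t A $ b $ j"
proof -
  let ?E = "mexp t A"
  have O: "outer (ebasis j) (ebasis j) $ c $ d = (if c = j \<and> d = j then 1 else 0)" for c d
    by (simp add: outer_def ebasis_def axis_def)
  have "(\<Sum>c\<in>UNIV. ?E$a$c * outer (ebasis j) (ebasis j) $ c $ d)
        = (\<Sum>c\<in>UNIV. if c = j then (if d = j then ?E$a$j else 0) else 0)" for d
    by (rule sum.cong) (auto simp: O)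
  then have EO: "(?E ** outer (ebasis j) (ebasis j)) $ a $ d = (if d = j then ?E $ a $ j else 0)" for d
    by (simp add: matrix_matrix_mult_def)
  have "(\<Sum>d\<in>UNIV. (?E ** outer (ebasis j) (ebasis j)) $ a $ d * mexp t (transpose A) $ d $ b)
        = (\<Sum>d\<in>UNIV. if d = j then ?E $ a $ j * ?E $ b $ j else 0)"
    by (rule sum.cong) (auto simp: EO mexp_transpose_entry)
  then show ?thesis
    by (simp add: matrix_matrix_mult_def)
qed




definition EC :: "real^'n^'n \<Rightarrow> 'n \<Rightarrow> 'n \<Rightarrow> complex \<Rightarrow> complex" where
  "EC A a b z = (\<Sum>k. of_real (ecoef A a b k) * z ^ k)"

lemma EC_deriv: "\<exists>D. (EC A a b has_field_derivative D) (at z)"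
  unfolding EC_def using termdiffs_strong_converges_everywhere[OF ecoef_summable] by blast

lemma EC_holo: "EC A a b holomorphic_on S"
  using EC_deriv unfolding holomorphic_on_def field_differentiable_def
  by (meson has_field_derivative_at_within)

lemma EC_cont: "continuous_on S (EC A a b)"
  by (rule holomorphic_on_imp_continuous_on[OF EC_holo])

lemma EC_real: "EC A a b (of_real t) = of_real (mexp t A $ a $ b)"
proof -
  have "(\<lambda>k. ecoef A a b k * t ^ k) sums (mexp t A $ a $ b)"
    using ecoef_summable[of A a b t] by (simp add: mexp_entry summable_sums)
  then have "(\<lambda>k. of_real (ecoef A a b k * t ^ k) :: complex) sums of_real (mexp t A $ a $ b)"
    by (simp only: sums_of_real_iff)
  then have "(\<lambda>k. of_real (ecoef A a b k) * (of_real t) ^ k :: complex) sums of_real (mexp t A $ a $ b)"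
    by simp
  then show ?thesis unfolding EC_def by (simp add: sums_iff)
qed

lemma EC_0: "EC A a b 0 = (if a = b then 1 else 0)"
proof -
  have "EC A a b 0 = of_real (ecoef A a b 0)" unfolding EC_def by (simp add: powser_zero)
  then show ?thesis by (simp add: ecoef_def mat_def)
qed

lemma entry_eq_Re: "mexp t A $ a $ b = Re (EC A a b (of_real t))"
  by (simp add: EC_real)

lemma cont_entry: "continuous_on S (\<lambda>t. mexp t A $ a $ b)"
proof -
  have "continuous_on S (\<lambda>t. Re (EC A a b (of_real t)))"
    by (intro continuous_intros continuous_on_compose2[OF EC_cont[of UNIV A a b]]) auto
  then show ?thesis by (simp add: EC_real)
qed

definition integrand :: "real^'n^'n \<Rightarrow> 'n \<Rightarrow> real \<Rightarrow> real^'n^'n" where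
  "integrand A j t = mexp t A ** outer (ebasis j) (ebasis j) ** mexp t (transpose A)"

lemma integrand_vec: "integrand A j t = (\<chi> a b. mexp t A $ a $ j * mexp t A $ b $ j)"
  by (simp add: vec_eq_iff integrand_def integrand_entry)

lemma integrand_cont: "continuous_on S (integrand A j)"
  unfolding integrand_vec by (intro continuous_intros cont_entry)

lemma integrand_integrable: "integrand A j integrable_on {0..T}"
  by (rule integrable_continuous_interval[OF integrand_cont])

lemma Wi_integral: "Wi A j T = integral {0..T} (integrand A j)"
  by (simp add: Wi_def integrand_def[abs_def])

lemma Wi_entry: fixes A :: "real^'n^'n" shows "Wi A j T $ a $ b = integral {0..T} (\<lambda>t. mexp t A $ a $ j * mexp t A $ b $ j)"
proof -
  have bl: "bounded_linear (\<lambda>M::real^'n^'n. M $ a $ b)"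
    using bounded_linear_compose[OF bounded_linear_vec_nth bounded_linear_vec_nth] by blast
  have "integral {0..T} ((\<lambda>M. M $ a $ b) \<circ> integrand A j) = integral {0..T} (integrand A j) $ a $ b"
    by (rule integral_linear[OF integrand_integrable bl])
  then show ?thesis by (simp add: Wi_integral o_def integrand_vec)
qed

lemma Wi_qf: fixes A :: "real^'n^'n" shows "x \<bullet> (Wi A j T *v x) = integral {0..T} (\<lambda>t. (\<Sum>a\<in>UNIV. x $ a * mexp t A $ a $ j)\<^sup>2)"
proof -
  have lin: "linear (\<lambda>M::real^'n^'n. x \<bullet> (M *v x))"
    by (intro linearI) (simp_all add: bf_matadd bf_matscale)
  then have bl: "bounded_linear (\<lambda>M::real^'n^'n. x \<bullet> (M *v x))"
    using linear_conv_bounded_linear by blast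
  have "integral {0..T} ((\<lambda>M. x \<bullet> (M *v x)) \<circ> integrand A j) = x \<bullet> (integral {0..T} (integrand A j) *v x)"
    by (rule integral_linear[OF integrand_integrable bl])
  moreover have "x \<bullet> (integrand A j t *v x) = (\<Sum>a\<in>UNIV. x $ a * mexp t A $ a $ j)\<^sup>2" for t
    unfolding qf_sum integrand_vec power2_eq_square sum_product
    by (simp add: mult_ac)
  ultimately show ?thesis by (simp add: Wi_integral o_def)
qed




lemma mexp0_entry: fixes A :: "real^'n^'n" shows "mexp 0 A $ a $ b = (if a = b then 1 else 0)"
proof -
  have "complex_of_real (mexp 0 A $ a $ b) = (if a = b then 1 else 0)"
    using EC_real[of A a b 0] EC_0[of A a b] by simp
  then show ?thesis by (cases "a = b") simp_all
qed

lemma Wi_symm: fixes A :: "real^'n^'n" shows "symm (Wi A j T)"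
  unfolding symm_def Wi_entry by (simp add: mult.commute)

lemma qf_integrand_cont: fixes A :: "real^'n^'n"
  shows "continuous_on S (\<lambda>t. (\<Sum>a\<in>UNIV. x $ a * mexp t A $ a $ j)\<^sup>2)"
  by (intro continuous_intros cont_entry)

lemma Wi_psd: fixes A :: "real^'n^'n" shows "x \<bullet> (Wi A j T *v x) \<ge> 0"
  unfolding Wi_qf
  by (rule integral_nonneg) (auto intro: integrable_continuous_interval qf_integrand_cont)

lemma Wi_pos: fixes A :: "real^'n^'n"
  assumes T: "T > 0" and x0: "x \<noteq> 0"
  shows "\<exists>j. x \<bullet> (Wi A j T *v x) > 0"
proof -
  obtain j where xj: "x $ j \<noteq> 0" using x0 by (auto simp: vec_eq_iff)
  let ?f = "\<lambda>t. (\<Sum>a\<in>UNIV. x $ a * mexp t A $ a $ j)\<^sup>2"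
  have "(\<Sum>a\<in>UNIV. x $ a * mexp 0 A $ a $ j) = (\<Sum>a\<in>UNIV. if a = j then x $ a else 0)"
    by (rule sum.cong) (simp_all add: mexp0_entry)
  then have f0: "?f 0 = (x $ j)\<^sup>2" by simp
  have "x \<bullet> (Wi A j T *v x) > 0"
  proof (rule ccontr)
    assume "\<not> x \<bullet> (Wi A j T *v x) > 0"
    then have "integral {0..T} ?f = 0" using Wi_psd[of x A j T] unfolding Wi_qf by linarith
    moreover have "?f integrable_on {0..T}" by (intro integrable_continuous_interval qf_integrand_cont)
    ultimately have hi: "(?f has_integral 0) (cbox 0 T)"
      using integrable_integral[of ?f "{0..T}"] by (simp add: cbox_interval)
    have "?f 0 = 0"
    proof (rule has_integral_0_cbox_imp_0[OF _ _ hi])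
      show "continuous_on (cbox 0 T) ?f" by (rule qf_integrand_cont)
      show "box 0 T \<noteq> {}" using T by simp
      show "0 \<in> cbox 0 T" using T by simp
    qed simp
    then show False using f0 xj by simp
  qed
  then show ?thesis by blast
qed




lemma det_scale_rows:
  fixes M :: "'a::comm_ring_1^'n^'n"
  shows "det (\<chi> i j. c * M$i$j) = c ^ CARD('n) * det M"
  unfolding det_def by (simp add: prod.distrib sum_distrib_left mult_ac)

lemma det_zero_mat: "det (\<chi> (i::'n::finite) (j::'n). (0::'a::comm_ring_1)) = 0"
proof -
  obtain k :: 'n where True by simp
  have "(\<Prod>i\<in>(UNIV::'n set). (0::'a)) = 0" by (rule prod_zero) auto
  then show ?thesis unfolding det_def by simp
qed

lemma tendsto_det:
  fixes f :: "'n::finite \<Rightarrow> 'n \<Rightarrow> 'b \<Rightarrow> 'a::{real_normed_field}"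
  assumes "\<And>i j. (f i j \<longlongrightarrow> L i j) F"
  shows "((\<lambda>x. det (\<chi> i j. f i j x)) \<longlongrightarrow> det (\<chi> i j. L i j)) F"
  unfolding det_def by (simp, intro tendsto_intros assms)

lemma holo_det:
  fixes f :: "'n::finite \<Rightarrow> 'n \<Rightarrow> complex \<Rightarrow> complex"
  assumes "\<And>i j. f i j holomorphic_on S"
  shows "(\<lambda>z. det (\<chi> i j. f i j z)) holomorphic_on S"
  unfolding det_def by (simp, intro holomorphic_intros assms)

lemma prim_exists:
  fixes A :: "real^'n^'n"
  shows "\<exists>G. \<forall>i j z. (G i j has_field_derivative (EC A i j z)^2) (at z) \<and> G i j 0 = 0"
proof -
  have "\<exists>g. \<forall>z. (g has_field_derivative (EC A i j z)^2) (at z)" for i j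
  proof -
    have "(\<lambda>z. (EC A i j z)^2) holomorphic_on UNIV" by (intro holomorphic_intros EC_holo)
    then obtain g where "\<And>x. (g has_field_derivative (EC A i j x)^2) (at x within UNIV)"
      using holomorphic_convex_primitive'[of UNIV "\<lambda>z. (EC A i j z)^2"] by auto
    then show ?thesis by auto
  qed
  then obtain g where g: "\<And>i j z. (g i j has_field_derivative (EC A i j z)^2) (at z)" by metis
  define G where "G i j z = g i j z - g i j 0" for i j z
  have "(G i j has_field_derivative (EC A i j z)^2) (at z)" for i j z
    unfolding G_def[abs_def] using DERIV_diff[OF g[of i j z] DERIV_const[of "g i j 0"]] by simp
  moreover have "G i j 0 = 0" for i j by (simp add: G_def)
  ultimately show ?thesis by blast
qed

lemma prim_real:
  fixes A :: "real^'n^'n"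
  assumes G: "\<And>z. (G has_field_derivative (EC A i j z)^2) (at z)" and G0: "G 0 = 0" and T: "T \<ge> 0"
  shows "G (of_real T) = of_real (integral {0..T} (\<lambda>t. (mexp t A $ i $ j)^2))"
proof -
  let ?e = "\<lambda>t. (mexp t A $ i $ j)^2"
  have "((\<lambda>t. G (of_real t)) has_vector_derivative complex_of_real (?e t)) (at t within {0..T})" for t
    using has_vector_derivative_real_field[OF G[of "of_real t"]] by (simp add: EC_real)
  then have "((\<lambda>t. complex_of_real (?e t)) has_integral (G (of_real T) - G (of_real 0))) {0..T}"
    by (intro fundamental_theorem_of_calculus T)
  then have hi: "((\<lambda>t. complex_of_real (?e t)) has_integral G (of_real T)) {0..T}" using G0 by simp
  have "((Re \<circ> (\<lambda>t. complex_of_real (?e t))) has_integral Re (G (of_real T))) {0..T}"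
    by (rule has_integral_linear[OF hi bounded_linear_Re])
  then have re: "(?e has_integral Re (G (of_real T))) {0..T}" by (simp add: o_def)
  have "((Im \<circ> (\<lambda>t. complex_of_real (?e t))) has_integral Im (G (of_real T))) {0..T}"
    by (rule has_integral_linear[OF hi bounded_linear_Im])
  then have "((\<lambda>t. 0::real) has_integral Im (G (of_real T))) {0..T}" by (simp add: o_def)
  then have im: "Im (G (of_real T)) = 0" using has_integral_0 has_integral_unique by blast
  have "integral {0..T} ?e = Re (G (of_real T))" using re by (rule integral_unique)
  then show ?thesis using im by (simp add: complex_eq_iff)
qed




lemma bad_set_countable:
  fixes A :: "real^'n^'n"
  shows "\<exists>N. countable N \<and> (\<forall>T\<ge>0. det (\<chi> i j. Wi A j T $ i $ i) = 0 \<longrightarrow> T \<in> N)"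
proof -
  obtain G where G: "\<And>i j z. (G i j has_field_derivative (EC A i j z)^2) (at z)"
      and G0: "\<And>i j. G i j 0 = 0"
    using prim_exists[of A] by blast
  define Hc where "Hc z = det (\<chi> i j. G i j z)" for z
  have holoG: "G i j holomorphic_on UNIV" for i j
    using G unfolding holomorphic_on_def field_differentiable_def
    by (meson has_field_derivative_at_within)
  have holo: "Hc holomorphic_on UNIV" unfolding Hc_def[abs_def] by (rule holo_det[OF holoG])
  have Gr: "G i j (of_real T) = of_real (Wi A j T $ i $ i)" if "T \<ge> 0" for i j T
    using prim_real[OF G G0 that] by (simp add: Wi_entry power2_eq_square)
  have Hr: "Hc (of_real T) = of_real (det (\<chi> i j. Wi A j T $ i $ i))" if "T \<ge> 0" for T
  proof -
    have "(\<chi> i j. G i j (of_real T)) = cm (\<chi> i j. Wi A j T $ i $ i)"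
      using Gr[OF that] by (simp add: cm_def vec_eq_iff)
    then show ?thesis by (simp add: Hc_def det_cm)
  qed
  have H0: "Hc 0 = 0" by (simp add: Hc_def G0 det_zero_mat)
  have "\<exists>z. Hc z \<noteq> 0"
  proof -
    have lim: "((\<lambda>z. G i j z / z) \<longlongrightarrow> (if i = j then 1 else 0)) (at 0)" for i j
    proof -
      have "((\<lambda>y. (G i j y - G i j 0) / (y - 0)) \<longlongrightarrow> (EC A i j 0)^2) (at 0)"
        using G[of i j 0] by (simp add: has_field_derivative_iff)
      then show ?thesis by (cases "i = j") (simp_all add: G0 EC_0)
    qed
    have "((\<lambda>z. det (\<chi> i j. G i j z / z)) \<longlongrightarrow> det (\<chi> (i::'n) (j::'n). if i = j then 1 else (0::complex))) (at 0)"
      using tendsto_det[of "\<lambda>i j z. G i j z / z" "\<lambda>i j. if i = j then 1 else 0" "at 0", OF lim] by simp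
    moreover have "det (\<chi> (i::'n) (j::'n). if i = j then 1 else (0::complex)) = 1"
    proof -
      have "(\<chi> (i::'n) (j::'n). if i = j then 1 else (0::complex)) = mat 1" by (simp add: mat_def vec_eq_iff)
      then show ?thesis by simp
    qed
    ultimately have "eventually (\<lambda>z. det (\<chi> i j. G i j z / z) \<noteq> 0) (at 0)"
      using tendsto_imp_eventually_ne by fastforce
    then obtain d where d: "d > 0" and dP: "\<And>z. z \<noteq> 0 \<Longrightarrow> dist z 0 < d \<Longrightarrow> det (\<chi> i j. G i j z / z) \<noteq> 0"
      unfolding eventually_at by auto
    define z :: complex where "z = of_real (d / 2)"
    have z0: "z \<noteq> 0" using d by (simp add: z_def)
    have "dist z 0 < d" using d by (simp add: z_def)
    then have nz: "det (\<chi> i j. G i j z / z) \<noteq> 0" using dP z0 by blast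
    have "(\<chi> i j. G i j z) = (\<chi> i j. z * ((\<chi> i j. G i j z / z) $ i $ j))" using z0 by (simp add: vec_eq_iff)
    then have "Hc z = det (\<chi> i j. z * ((\<chi> i j. G i j z / z) $ i $ j))"
      unfolding Hc_def by (rule arg_cong)
    also have "\<dots> = z ^ CARD('n) * det (\<chi> i j. G i j z / z)" by (rule det_scale_rows)
    finally have "Hc z = z ^ CARD('n) * det (\<chi> i j. G i j z / z)" .
    then have "Hc z \<noteq> 0" using z0 nz by simp
    then show ?thesis by blast
  qed
  then have nc: "\<not> Hc constant_on UNIV" using H0 unfolding constant_on_def by (metis UNIV_I)
  have cz: "countable {z\<in>UNIV. Hc z = 0}"
    by (rule holomorphic_countable_zeros[OF holo open_UNIV connected_UNIV fsigma_UNIV nc])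
  let ?N = "Re ` {z\<in>UNIV. Hc z = 0}"
  have "countable ?N" using cz by simp
  moreover have "T \<in> ?N" if "T \<ge> 0" "det (\<chi> i j. Wi A j T $ i $ i) = 0" for T
  proof -
    have "Hc (of_real T) = 0" using Hr[OF that(1)] that(2) by simp
    then show ?thesis by (intro image_eqI[of _ _ "of_real T"]) auto
  qed
  ultimately show ?thesis by blast
qed

lemma Wi_inj:
  fixes A :: "real^'n^'n"
  assumes d: "det (\<chi> i j. Wi A j T $ i $ i) \<noteq> 0" and p: "(\<Sum>j\<in>UNIV. p$j *\<^sub>R Wi A j T) = 0"
  shows "p = 0"
proof (rule ccontr)
  assume "p \<noteq> 0"
  moreover have "(\<chi> i j. Wi A j T $ i $ i) *v p = 0"
  proof -
    have "(\<Sum>j\<in>UNIV. p$j * Wi A j T $ i $ i) = 0" for i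
      using arg_cong[OF p, of "\<lambda>M. M $ i $ i"] by simp
    then show ?thesis by (simp add: matrix_vector_mult_def vec_eq_iff mult.commute)
  qed
  ultimately show False using ker_det0 d by blast
qed

theorem theorem1:
  fixes A :: "real^'n^'n"
  shows "AE T in lborel. T > 0 \<longrightarrow>
           unique_minimizer (fT A T) (XT A T \<inter> std_simplex) \<and>
           unique_minimizer (gT A T) (XT A T \<inter> std_simplex)"
proof -
  obtain N where N: "countable N" and bad: "\<And>T. T \<ge> 0 \<Longrightarrow> det (\<chi> i j. Wi A j T $ i $ i) = 0 \<Longrightarrow> T \<in> N"
    using bad_set_countable[of A] by blast
  have good: "unique_minimizer (fT A T) (XT A T \<inter> std_simplex) \<and>
           unique_minimizer (gT A T) (XT A T \<inter> std_simplex)"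
    if T: "T > 0" and d: "det (\<chi> i j. Wi A j T $ i $ i) \<noteq> 0" for T
  proof -
    interpret gr: gram "\<lambda>j. Wi A j T"
    proof
      show "\<And>i. symm (Wi A i T)" by (rule Wi_symm)
      show "\<And>i x. x \<bullet> (Wi A i T *v x) \<ge> 0" by (rule Wi_psd)
      show "\<And>x. x \<noteq> 0 \<Longrightarrow> \<exists>i. x \<bullet> (Wi A i T *v x) > 0" using Wi_pos[OF T] by blast
      show "\<And>p. (\<Sum>i\<in>UNIV. p $ i *\<^sub>R Wi A i T) = 0 \<Longrightarrow> p = 0" using Wi_inj[OF d] by blast
    qed
    have Weq: "gr.W p = Wp A p T" for p by (simp add: gr.W_def Wp_def)
    have fe: "fT A T = (\<lambda>p. - ln (det (gr.W p)))" by (simp add: fun_eq_iff fT_def Weq)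
    have ge: "gT A T = (\<lambda>p. trace (matrix_inv (gr.W p)))" by (simp add: fun_eq_iff gT_def Weq)
    have xe: "XT A T = {p. pos_def (gr.W p)}" by (simp add: XT_def Weq)
    show ?thesis using gr.f_unique gr.g_unique unfolding fe ge xe by blast
  qed
  have "N \<in> null_sets lborel" using N by (rule countable_imp_null_set_lborel)
  then show ?thesis
  proof (rule AE_I')
    show "{T \<in> space lborel. \<not> (T > 0 \<longrightarrow>
           unique_minimizer (fT A T) (XT A T \<inter> std_simplex) \<and>
           unique_minimizer (gT A T) (XT A T \<inter> std_simplex))} \<subseteq> N"
      using good bad by fastforce
  qed
qed


end
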